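(* For every $n\ge 1$, the $2$-structure $\mathscr{M}_n$ is terminating: for every discrete category $\mathscr{C}$, every infinite chain $t_1\xrightarrow{\alpha_1}t_2\xrightarrow{\alpha_2}t_3\to\cdots$ of morphisms in $\mathbb{F}_{\mathscr{C}}(\mathscr{M}_n)$ contains cofinitely many identity morphisms.
   Context: General framework: a $2$-structure $\langle\mathcal{F},\theta_{\mathcal{F}},\mathcal{T},\theta_{\mathcal{T}}\rangle$ consists of function symbols $\mathcal{F}$, term equations $\theta_{\mathcal{F}}$, labelled reduction rules $\mathcal{T}$ between congruence classes of terms, and equations $\theta_{\mathcal{T}}$ between reductions with equal source and target; over a category $\mathscr{C}$, reductions are generated from morphisms of $\mathscr{C}$ by function symbols, rule applications (with reductions substituted for the variables) and composition $\varphi\cdot\psi$ (diagrammatic order), and $\theta_{\mathcal{T}}$ always contains all instances of the identity, associativity, functoriality and naturality equations. $\mathbb{F}_{\mathscr{C}}(\mathcal{S})$ is the category whose objects are classes of terms over $\mathrm{Ob}(\mathscr{C})$ and whose morphisms are reductions modulo the congruence generated by $\theta_{\mathcal{T}}$. $\mathscr{M}_n$ (the $2$-structure for $n$-fold monoidal categories): binary function symbols $\otimes_1,\dots,\otimes_n$ and a nullary symbol $I$; term equations $A\otimes_i(B\otimes_iC)=(A\otimes_iB)\otimes_iC$, $A\otimes_iI=A$, $I\otimes_iA=A$ for $1\le i\le n$; for each $1\le i<j\le n$ a reduction rule (interchange) $\eta^{ij}_{A,B,C,D}:(A\otimes_jB)\otimes_i(C\otimes_jD)\to(A\otimes_iC)\otimes_j(B\otimes_iD)$;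 equations in $\theta_{\mathcal{T}}$ besides the mandatory ones: (internal unit) $\eta^{ij}_{A,B,I,I}=\eta^{ij}_{I,I,A,B}=1_{A\otimes_jB}$; (external unit) $\eta^{ij}_{A,I,B,I}=\eta^{ij}_{I,A,I,B}=1_{A\otimes_iB}$; (internal associativity) $(\eta^{ij}_{A,B,C,D}\otimes_i1_{E\otimes_jF})\cdot\eta^{ij}_{A\otimes_iC,B\otimes_iD,E,F}=(1_{A\otimes_jB}\otimes_i\eta^{ij}_{C,D,E,F})\cdot\eta^{ij}_{A,B,C\otimes_iE,D\otimes_iF}$; (external associativity) $\eta^{ij}_{A\otimes_jB,C,D\otimes_jE,F}\cdot(\eta^{ij}_{A,B,D,E}\otimes_j1_{C\otimes_iF})=\eta^{ij}_{A,B\otimes_jC,D,E\otimes_jF}\cdot(1_{A\otimes_iD}\otimes_j\eta^{ij}_{B,C,E,F})$; (giant hexagon) for $1\le i<j<k\le n$, as morphisms from $((A\otimes_kB)\otimes_j(C\otimes_kD))\otimes_i((E\otimes_kF)\otimes_j(G\otimes_kH))$ to $((A\otimes_iE)\otimes_j(C\otimes_iG))\otimes_k((B\otimes_iF)\otimes_j(D\otimes_iH))$: $(\eta^{jk}_{A,B,C,D}\otimes_i\eta^{jk}_{E,F,G,H})\cdot\eta^{ik}_{A\otimes_jC,B\otimes_jD,E\otimes_jG,F\otimes_jH}\cdot(\eta^{ij}_{A,C,E,G}\otimes_k\eta^{ij}_{B,D,F,H})=\eta^{ij}_{A\otimes_kB,C\otimes_kD,E\otimes_kF,G\otimes_kH}\cdot(\eta^{ik}_{A,B,E,F}\otimes_j\eta^{ik}_{C,D,G,H})\cdot\eta^{jk}_{A\otimes_iE,B\otimes_iF,C\otimes_iG,D\otimes_iH}$.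 *)

theory Defs
  imports Main
begin

text \<open>Terms of the 2-structure M_n over the objects of a discrete category
  (objects = elements of the type 'a).  Tens i is the i-th tensor, Unit is I.\<close>
datatype 'a trm = Var 'a | Unit | Tens nat "'a trm" "'a trm"

fun wft :: "nat \<Rightarrow> 'a trm \<Rightarrow> bool" where
  "wft n (Var a) = True"
| "wft n Unit = True"
| "wft n (Tens i s t) = (1 \<le> i \<and> i \<le> n \<and> wft n s \<and> wft n t)"

inductive teq :: "nat \<Rightarrow> 'a trm \<Rightarrow> 'a trm \<Rightarrow> bool" for n where
  teq_refl: "teq n t t"
| teq_sym: "teq n s t \<Longrightarrow> teq n t s"
| teq_trans: "teq n s t \<Longrightarrow> teq n t u \<Longrightarrow> teq n s u"
| teq_cong: "teq n s s' \<Longrightarrow> teq n t t' \<Longrightarrow> teq n (Tens i s t) (Tens i s' t')"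
| teq_assoc: "1 \<le> i \<Longrightarrow> i \<le> n \<Longrightarrow> teq n (Tens i a (Tens i b c)) (Tens i (Tens i a b) c)"
| teq_runit: "1 \<le> i \<Longrightarrow> i \<le> n \<Longrightarrow> teq n (Tens i a Unit) a"
| teq_lunit: "1 \<le> i \<Longrightarrow> i \<le> n \<Longrightarrow> teq n (Tens i Unit a) a"

text \<open>Reductions over a discrete category: RMor a is the (identity) morphism of
  the object a, RI the nullary function symbol, RTens i the i-th tensor,
  REta i j the interchange rule with reductions substituted for A,B,C,D,
  RComp f g the composition f then g (diagrammatic order).\<close>
datatype 'a red = RMor 'a | RI | RTens nat "'a red" "'a red"
  | REta nat nat "'a red" "'a red" "'a red" "'a red" | RComp "'a red" "'a red"

fun rsrc :: "'a red \<Rightarrow> 'a trm" where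
  "rsrc (RMor a) = Var a"
| "rsrc RI = Unit"
| "rsrc (RTens i f g) = Tens i (rsrc f) (rsrc g)"
| "rsrc (REta i j a b c d) = Tens i (Tens j (rsrc a) (rsrc b)) (Tens j (rsrc c) (rsrc d))"
| "rsrc (RComp f g) = rsrc f"

fun rtgt :: "'a red \<Rightarrow> 'a trm" where
  "rtgt (RMor a) = Var a"
| "rtgt RI = Unit"
| "rtgt (RTens i f g) = Tens i (rtgt f) (rtgt g)"
| "rtgt (REta i j a b c d) = Tens j (Tens i (rtgt a) (rtgt c)) (Tens i (rtgt b) (rtgt d))"
| "rtgt (RComp f g) = rtgt g"

fun wfr :: "nat \<Rightarrow> 'a red \<Rightarrow> bool" where
  "wfr n (RMor a) = True"
| "wfr n RI = True"
| "wfr n (RTens i f g) = (1 \<le> i \<and> i \<le> n \<and> wfr n f \<and> wfr n g)"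
| "wfr n (REta i j a b c d) = (1 \<le> i \<and> i < j \<and> j \<le> n \<and> wfr n a \<and> wfr n b \<and> wfr n c \<and> wfr n d)"
| "wfr n (RComp f g) = (wfr n f \<and> wfr n g \<and> teq n (rtgt f) (rsrc g))"

fun idr :: "'a trm \<Rightarrow> 'a red" where
  "idr (Var a) = RMor a"
| "idr Unit = RI"
| "idr (Tens i s t) = RTens i (idr s) (idr t)"

definition ET :: "nat \<Rightarrow> nat \<Rightarrow> 'a trm \<Rightarrow> 'a trm \<Rightarrow> 'a trm \<Rightarrow> 'a trm \<Rightarrow> 'a red" where
  "ET i j A B C D = REta i j (idr A) (idr B) (idr C) (idr D)"

text \<open>Congruence on well-formed reductions generated by theta_T of M_n
  (mandatory identity, associativity, functoriality, naturality equations,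
  the term equations lifted to reductions, and the specific equations of M_n).\<close>
inductive req :: "nat \<Rightarrow> 'a red \<Rightarrow> 'a red \<Rightarrow> bool" for n where
  req_refl: "wfr n f \<Longrightarrow> req n f f"
| req_sym: "req n f g \<Longrightarrow> req n g f"
| req_trans: "req n f g \<Longrightarrow> req n g h \<Longrightarrow> req n f h"
| req_tens: "req n f f' \<Longrightarrow> req n g g' \<Longrightarrow> wfr n (RTens i f g) \<Longrightarrow> wfr n (RTens i f' g')
    \<Longrightarrow> req n (RTens i f g) (RTens i f' g')"
| req_eta: "req n a a' \<Longrightarrow> req n b b' \<Longrightarrow> req n c c' \<Longrightarrow> req n d d'
    \<Longrightarrow> wfr n (REta i j a b c d) \<Longrightarrow> wfr n (REta i j a' b' c' d')
    \<Longrightarrow> req n (REta i j a b c d) (REta i j a' b' c' d')"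
| req_comp: "req n f f' \<Longrightarrow> req n g g' \<Longrightarrow> wfr n (RComp f g) \<Longrightarrow> wfr n (RComp f' g')
    \<Longrightarrow> req n (RComp f g) (RComp f' g')"
| req_tassoc: "wfr n (RTens i f (RTens i g h)) \<Longrightarrow>
    req n (RTens i f (RTens i g h)) (RTens i (RTens i f g) h)"
| req_trunit: "wfr n (RTens i f RI) \<Longrightarrow> req n (RTens i f RI) f"
| req_tlunit: "wfr n (RTens i RI f) \<Longrightarrow> req n (RTens i RI f) f"
| req_idl: "wfr n (RComp (idr u) f) \<Longrightarrow> wft n u \<Longrightarrow> req n (RComp (idr u) f) f"
| req_idr: "wfr n (RComp f (idr u)) \<Longrightarrow> wft n u \<Longrightarrow> req n (RComp f (idr u)) f"
| req_cassoc: "wfr n (RComp (RComp f g) h) \<Longrightarrow>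
    req n (RComp (RComp f g) h) (RComp f (RComp g h))"
| req_funct: "wfr n (RTens i (RComp f g) (RComp f' g')) \<Longrightarrow>
    req n (RTens i (RComp f g) (RComp f' g')) (RComp (RTens i f f') (RTens i g g'))"
| req_nat1: "wfr n (REta i j a b c d) \<Longrightarrow>
    req n (REta i j a b c d)
      (RComp (ET i j (rsrc a) (rsrc b) (rsrc c) (rsrc d))
             (RTens j (RTens i a c) (RTens i b d)))"
| req_nat2: "wfr n (REta i j a b c d) \<Longrightarrow>
    req n (REta i j a b c d)
      (RComp (RTens i (RTens j a b) (RTens j c d))
             (ET i j (rtgt a) (rtgt b) (rtgt c) (rtgt d)))"
| req_iunit1: "wfr n (ET i j A B Unit Unit) \<Longrightarrow> wft n A \<Longrightarrow> wft n B \<Longrightarrow>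
    req n (ET i j A B Unit Unit) (idr (Tens j A B))"
| req_iunit2: "wfr n (ET i j Unit Unit A B) \<Longrightarrow> wft n A \<Longrightarrow> wft n B \<Longrightarrow>
    req n (ET i j Unit Unit A B) (idr (Tens j A B))"
| req_eunit1: "wfr n (ET i j A Unit B Unit) \<Longrightarrow> wft n A \<Longrightarrow> wft n B \<Longrightarrow>
    req n (ET i j A Unit B Unit) (idr (Tens i A B))"
| req_eunit2: "wfr n (ET i j Unit A Unit B) \<Longrightarrow> wft n A \<Longrightarrow> wft n B \<Longrightarrow>
    req n (ET i j Unit A Unit B) (idr (Tens i A B))"
| req_iassoc: "wfr n (ET i j A B C D) \<Longrightarrow> wft n E \<Longrightarrow> wft n F \<Longrightarrow>
    req n (RComp (RTens i (ET i j A B C D) (idr (Tens j E F)))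
                 (ET i j (Tens i A C) (Tens i B D) E F))
          (RComp (RTens i (idr (Tens j A B)) (ET i j C D E F))
                 (ET i j A B (Tens i C E) (Tens i D F)))"
| req_eassoc: "wfr n (ET i j A B D E) \<Longrightarrow> wft n C \<Longrightarrow> wft n F \<Longrightarrow>
    req n (RComp (ET i j (Tens j A B) C (Tens j D E) F)
                 (RTens j (ET i j A B D E) (idr (Tens i C F))))
          (RComp (ET i j A (Tens j B C) D (Tens j E F))
                 (RTens j (idr (Tens i A D)) (ET i j B C E F)))"
| req_hex: "1 \<le> i \<Longrightarrow> i < j \<Longrightarrow> j < k \<Longrightarrow> k \<le> n \<Longrightarrow>
    wft n A \<Longrightarrow> wft n B \<Longrightarrow> wft n C \<Longrightarrow> wft n D \<Longrightarrow>
    wft n E \<Longrightarrow> wft n F \<Longrightarrow> wft n G \<Longrightarrow> wft n H \<Longrightarrow>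
    req n (RComp (RComp (RTens i (ET j k A B C D) (ET j k E F G H))
                        (ET i k (Tens j A C) (Tens j B D) (Tens j E G) (Tens j F H)))
                 (RTens k (ET i j A C E G) (ET i j B D F H)))
          (RComp (RComp (ET i j (Tens k A B) (Tens k C D) (Tens k E F) (Tens k G H))
                        (RTens j (ET i k A B E F) (ET i k C D G H)))
                 (ET j k (Tens i A E) (Tens i B F) (Tens i C G) (Tens i D H)))"

end

theory Submission
  imports Defs
begin

fun cnt :: "'a trm \<Rightarrow> nat" where
  "cnt (Var a) = 1" | "cnt Unit = 0" | "cnt (Tens i s t) = cnt s + cnt t"

fun val :: "'a trm \<Rightarrow> nat" where
  "val (Var a) = 0" | "val Unit = 0" | "val (Tens i s t) = val s + val t + i * cnt s * cnt t"

lemma teq_inv: "teq n s t \<Longrightarrow> cnt s = cnt t \<and> val s = val t \<and> (wft n s = wft n t)"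
  by (induction rule: teq.induct) (auto simp: algebra_simps)

lemma idr_simps[simp]: "rsrc (idr t) = t" "rtgt (idr t) = t"
  by (induction t) auto

lemma wfr_idr: "wft n t \<Longrightarrow> wfr n (idr t)"
  by (induction t) auto

lemma wfr_wft: "wfr n f \<Longrightarrow> wft n (rsrc f) \<and> wft n (rtgt f)"
  by (induction f) (auto dest: teq_inv)

lemma teq_req: "teq n s t \<Longrightarrow> wft n s \<Longrightarrow> req n (idr s) (idr t)"
proof (induction rule: teq.induct)
  case (teq_refl t) then show ?case by (simp add: req_refl wfr_idr)
next
  case (teq_sym s t) then show ?case using teq_inv req_sym by blast
next
  case (teq_trans s t u) then show ?case using teq_inv req_trans by blast
next
  case (teq_cong s s' t t' i)
  have "wft n s'" "wft n t'" using teq_cong teq_inv by auto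
  then show ?case using teq_cong by (auto intro!: req_tens simp: wfr_idr)
next
  case (teq_assoc i a b c) then show ?case by (auto intro!: req_tassoc simp: wfr_idr)
next
  case (teq_runit i a) then show ?case by (auto intro!: req_trunit simp: wfr_idr)
next
  case (teq_lunit i a) then show ?case by (auto intro!: req_tlunit simp: wfr_idr)
qed

lemma tc1: "teq n s s' \<Longrightarrow> teq n (Tens i s t) (Tens i s' t)"
  by (simp add: teq_cong teq_refl)
lemma tc2: "teq n t t' \<Longrightarrow> teq n (Tens i s t) (Tens i s t')"
  by (simp add: teq_cong teq_refl)
lemma tassoc': "1 \<le> i \<Longrightarrow> i \<le> n \<Longrightarrow> teq n (Tens i (Tens i a b) c) (Tens i a (Tens i b c))"
  by (simp add: teq_assoc teq_sym)
lemma tUU: "1 \<le> i \<Longrightarrow> i \<le> n \<Longrightarrow> teq n (Tens i Unit Unit) Unit"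
  by (simp add: teq_runit)

lemma req_teq: "req n f g \<Longrightarrow> teq n (rsrc f) (rsrc g) \<and> teq n (rtgt f) (rtgt g)"
proof (induction rule: req.induct)
  case (req_iunit1 i j A B)
  then have r: "1 \<le> i" "i < j" "j \<le> n" by (auto simp: ET_def)
  have "teq n (Tens i (Tens j A B) (Tens j Unit Unit)) (Tens j A B)"
    by (meson r tc2 tUU teq_runit teq_trans less_imp_le_nat order.trans)
  moreover have "teq n (Tens j (Tens i A Unit) (Tens i B Unit)) (Tens j A B)"
    by (meson r tc1 tc2 teq_runit teq_trans less_imp_le_nat order.trans)
  ultimately show ?case by (simp add: ET_def)
next
  case (req_iunit2 i j A B)
  then have r: "1 \<le> i" "i < j" "j \<le> n" by (auto simp: ET_def)
  have "teq n (Tens i (Tens j Unit Unit) (Tens j A B)) (Tens j A B)"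
    by (meson r tc1 tUU teq_lunit teq_trans less_imp_le_nat order.trans)
  moreover have "teq n (Tens j (Tens i Unit A) (Tens i Unit B)) (Tens j A B)"
    by (meson r tc1 tc2 teq_lunit teq_trans less_imp_le_nat order.trans)
  ultimately show ?case by (simp add: ET_def)
next
  case (req_eunit1 i j A B)
  then have r: "1 \<le> i" "i < j" "j \<le> n" by (auto simp: ET_def)
  have "teq n (Tens i (Tens j A Unit) (Tens j B Unit)) (Tens i A B)"
    by (meson r tc1 tc2 teq_runit teq_trans less_imp_le_nat order.trans)
  moreover have "teq n (Tens j (Tens i A B) (Tens i Unit Unit)) (Tens i A B)"
    by (meson r tc2 tUU teq_runit teq_trans less_imp_le_nat order.trans)
  ultimately show ?case by (simp add: ET_def)
next
  case (req_eunit2 i j A B)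
  then have r: "1 \<le> i" "i < j" "j \<le> n" by (auto simp: ET_def)
  have "teq n (Tens i (Tens j Unit A) (Tens j Unit B)) (Tens i A B)"
    by (meson r tc1 tc2 teq_lunit teq_trans less_imp_le_nat order.trans)
  moreover have "teq n (Tens j (Tens i Unit Unit) (Tens i A B)) (Tens i A B)"
    by (meson r tc1 tUU teq_lunit teq_trans less_imp_le_nat order.trans)
  ultimately show ?case by (simp add: ET_def)
next
  case (req_iassoc i j A B C D E F)
  then have r: "1 \<le> i" "i < j" "j \<le> n" by (auto simp: ET_def)
  have "teq n (Tens i (Tens i (Tens j A B) (Tens j C D)) (Tens j E F))
            (Tens i (Tens j A B) (Tens i (Tens j C D) (Tens j E F)))"
    using r by (simp add: tassoc')
  moreover have "teq n (Tens j (Tens i (Tens i A C) E) (Tens i (Tens i B D) F))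
             (Tens j (Tens i A (Tens i C E)) (Tens i B (Tens i D F)))"
    using r by (meson teq_cong tassoc' less_imp_le_nat order.trans)
  ultimately show ?case by (simp add: ET_def)
next
  case (req_eassoc i j A B D E C F)
  then have r: "1 \<le> i" "i < j" "j \<le> n" by (auto simp: ET_def)
  have "teq n (Tens i (Tens j (Tens j A B) C) (Tens j (Tens j D E) F))
            (Tens i (Tens j A (Tens j B C)) (Tens j D (Tens j E F)))"
    using r by (meson teq_cong tassoc' less_imp_le_nat order.trans)
  moreover have "teq n (Tens j (Tens j (Tens i A D) (Tens i B E)) (Tens i C F))
             (Tens j (Tens i A D) (Tens j (Tens i B E) (Tens i C F)))"
    using r by (simp add: tassoc')
  ultimately show ?case by (simp add: ET_def)
qed (auto simp: ET_def intro: teq.intros)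

lemma eta_arith:
  fixes i j va vb vc vd va' vb' vc' vd' a b c d :: nat
  shows "va + vb + j*a*b + (vc + vd + j*c*d) + i*(a+b)*(c+d)
        = va + vb + vc + vd + j*(a*b+c*d) + i*(a*c+b*d) + i*(a*d+b*c)"
    and "va' + vc' + i*a*c + (vb' + vd' + i*b*d) + j*(a+c)*(b+d)
        = va' + vb' + vc' + vd' + j*(a*b+c*d) + i*(a*c+b*d) + j*(a*d+b*c)"
  by (simp_all add: algebra_simps)

lemma wfr_mono: "wfr n f \<Longrightarrow> cnt (rsrc f) = cnt (rtgt f) \<and> val (rsrc f) \<le> val (rtgt f)"
proof (induction f)
  case (RTens i f g) then show ?case by auto
next
  case (REta i j a b c d)
  then have h: "cnt (rsrc a) = cnt (rtgt a)" "cnt (rsrc b) = cnt (rtgt b)"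
     "cnt (rsrc c) = cnt (rtgt c)" "cnt (rsrc d) = cnt (rtgt d)"
     "val (rsrc a) \<le> val (rtgt a)" "val (rsrc b) \<le> val (rtgt b)"
     "val (rsrc c) \<le> val (rtgt c)" "val (rsrc d) \<le> val (rtgt d)" "i < j" by auto
  have m: "i * (cnt (rtgt a) * cnt (rtgt d) + cnt (rtgt c) * cnt (rtgt b))
     \<le> j * (cnt (rtgt a) * cnt (rtgt d) + cnt (rtgt c) * cnt (rtgt b))"
    using h(9) by simp
  have m2: "i * (cnt (rtgt a) * cnt (rtgt d) + cnt (rtgt b) * cnt (rtgt c))
     \<le> j * (cnt (rtgt a) * cnt (rtgt d) + cnt (rtgt c) * cnt (rtgt b))"
    using m by (simp add: mult.commute)
  show ?case using h apply (simp add: eta_arith del: add_mult_distrib add_mult_distrib2)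
    using m2 h by linarith
next
  case (RComp f g) then show ?case using teq_inv by fastforce
qed auto

lemma cnt0: "wft n s \<Longrightarrow> cnt s = 0 \<Longrightarrow> teq n s Unit"
proof (induction s)
  case (Tens i s t)
  then have "teq n (Tens i s t) (Tens i Unit Unit)" by (simp add: teq_cong)
  then show ?case using Tens tUU teq_trans by fastforce
qed (auto intro: teq_refl)

lemma val_bound: "wft n s \<Longrightarrow> val s \<le> n * cnt s ^ 2"
proof (induction s)
  case (Tens i s t)
  then have "val (Tens i s t) \<le> n * cnt s ^ 2 + n * cnt t ^ 2 + n * cnt s * cnt t"
    by (auto intro!: add_mono mult_right_mono)
  also have "\<dots> \<le> n * (cnt s + cnt t) ^ 2" by (simp add: power2_eq_square algebra_simps)
  finally show ?case by simp
qed auto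

lemma ET_sub:
  assumes r: "1 \<le> i" "i < j" "j \<le> n"
    and w: "wft n A" "wft n B" "wft n C" "wft n D"
    and e: "teq n A A'" "teq n B B'" "teq n C C'" "teq n D D'"
  shows "req n (ET i j A B C D) (ET i j A' B' C' D')"
proof -
  have w': "wft n A'" "wft n B'" "wft n C'" "wft n D'" using w e teq_inv by blast+
  show ?thesis unfolding ET_def
    by (rule req_eta) (use r w w' e teq_req wfr_idr in auto)
qed

lemma ET_triv:
  assumes r: "1 \<le> i" "i < j" "j \<le> n"
    and w: "wft n A" "wft n B" "wft n C" "wft n D"
    and z: "cnt A = 0 \<or> cnt D = 0" "cnt B = 0 \<or> cnt C = 0"
  shows "req n (ET i j A B C D) (idr (Tens i (Tens j A B) (Tens j C D)))"
proof -
  have ri: "1 \<le> i" "i \<le> n" and rj: "1 \<le> j" "j \<le> n" using r by auto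
  have ws: "wft n (Tens i (Tens j A B) (Tens j C D))" using w ri rj by simp
  consider "cnt A = 0" "cnt B = 0" | "cnt A = 0" "cnt C = 0" | "cnt D = 0" "cnt B = 0"
    | "cnt D = 0" "cnt C = 0" using z by argo
  then show ?thesis
  proof cases
    case 1
    have uA: "teq n A Unit" and uB: "teq n B Unit" using 1 w cnt0 by auto
    have "req n (ET i j A B C D) (ET i j Unit Unit C D)"
      by (rule ET_sub) (use r w uA uB teq_refl in auto)
    moreover have "req n (ET i j Unit Unit C D) (idr (Tens j C D))"
      by (rule req_iunit2) (use r w wfr_idr in \<open>auto simp: ET_def\<close>)
    moreover have "teq n (Tens i (Tens j A B) (Tens j C D)) (Tens j C D)"
      by (meson ri rj uA uB tc1 tc2 teq_cong tUU teq_lunit teq_trans)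
    then have "req n (idr (Tens j C D)) (idr (Tens i (Tens j A B) (Tens j C D)))"
      using ws teq_req req_sym by blast
    ultimately show ?thesis using req_trans by blast
  next
    case 2
    have uA: "teq n A Unit" and uB: "teq n C Unit" using 2 w cnt0 by auto
    have "req n (ET i j A B C D) (ET i j Unit B Unit D)"
      by (rule ET_sub) (use r w uA uB teq_refl in auto)
    moreover have "req n (ET i j Unit B Unit D) (idr (Tens i B D))"
      by (rule req_eunit2) (use r w wfr_idr in \<open>auto simp: ET_def\<close>)
    moreover have "teq n (Tens i (Tens j A B) (Tens j C D)) (Tens i B D)"
      by (meson ri rj uA uB tc1 tc2 teq_cong teq_lunit teq_trans)
    then have "req n (idr (Tens i B D)) (idr (Tens i (Tens j A B) (Tens j C D)))"
      using ws teq_req req_sym by blast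
    ultimately show ?thesis using req_trans by blast
  next
    case 3
    have uA: "teq n D Unit" and uB: "teq n B Unit" using 3 w cnt0 by auto
    have "req n (ET i j A B C D) (ET i j A Unit C Unit)"
      by (rule ET_sub) (use r w uA uB teq_refl in auto)
    moreover have "req n (ET i j A Unit C Unit) (idr (Tens i A C))"
      by (rule req_eunit1) (use r w wfr_idr in \<open>auto simp: ET_def\<close>)
    moreover have "teq n (Tens i (Tens j A B) (Tens j C D)) (Tens i A C)"
      by (meson ri rj uA uB tc1 tc2 teq_cong teq_runit teq_trans)
    then have "req n (idr (Tens i A C)) (idr (Tens i (Tens j A B) (Tens j C D)))"
      using ws teq_req req_sym by blast
    ultimately show ?thesis using req_trans by blast
  next
    case 4
    have uA: "teq n D Unit" and uB: "teq n C Unit" using 4 w cnt0 by auto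
    have "req n (ET i j A B C D) (ET i j A B Unit Unit)"
      by (rule ET_sub) (use r w uA uB teq_refl in auto)
    moreover have "req n (ET i j A B Unit Unit) (idr (Tens j A B))"
      by (rule req_iunit1) (use r w wfr_idr in \<open>auto simp: ET_def\<close>)
    moreover have "teq n (Tens i (Tens j A B) (Tens j C D)) (Tens j A B)"
      by (meson ri rj uA uB tc1 tc2 teq_cong tUU teq_runit teq_trans)
    then have "req n (idr (Tens j A B)) (idr (Tens i (Tens j A B) (Tens j C D)))"
      using ws teq_req req_sym by blast
    ultimately show ?thesis using req_trans by blast
  qed
qed

lemmas req_trans_rule[trans] = req_trans

lemma eq_id: "wfr n f \<Longrightarrow> val (rsrc f) = val (rtgt f) \<Longrightarrow> req n f (idr (rsrc f))"
proof (induction f)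
  case (RMor x) then show ?case by (simp add: req_refl)
next
  case RI then show ?case by (simp add: req_refl)
next
  case (RTens i f g)
  have mf: "cnt (rsrc f) = cnt (rtgt f) \<and> val (rsrc f) \<le> val (rtgt f)"
   and mg: "cnt (rsrc g) = cnt (rtgt g) \<and> val (rsrc g) \<le> val (rtgt g)"
    using RTens.prems wfr_mono by auto
  then have "val (rsrc f) = val (rtgt f)" "val (rsrc g) = val (rtgt g)" using RTens.prems by auto
  then have "req n f (idr (rsrc f))" "req n g (idr (rsrc g))" using RTens by auto
  moreover have "wfr n (idr (rsrc f))" "wfr n (idr (rsrc g))"
    using RTens.prems wfr_wft wfr_idr by auto
  ultimately show ?case using RTens.prems by (auto intro!: req_tens)
next
  case (RComp f g)
  have w: "wfr n f" "wfr n g" "teq n (rtgt f) (rsrc g)" using RComp.prems by auto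
  have mf: "val (rsrc f) \<le> val (rtgt f)" and mg: "val (rsrc g) \<le> val (rtgt g)"
    using w wfr_mono by auto
  have "val (rtgt f) = val (rsrc g)" using w teq_inv by blast
  then have e: "val (rsrc f) = val (rtgt f)" "val (rsrc g) = val (rtgt g)"
    using RComp.prems mf mg by auto
  have hf: "req n f (idr (rsrc f))" and hg: "req n g (idr (rsrc g))" using RComp w e by auto
  have wf: "wft n (rsrc f)" "wft n (rsrc g)" using w wfr_wft by auto
  have "teq n (rtgt f) (rsrc f)" using req_teq[OF hf] by simp
  then have t: "teq n (rsrc f) (rsrc g)" using w teq_sym teq_trans by blast
  have "req n (RComp f g) (RComp (idr (rsrc f)) (idr (rsrc g)))"
    by (rule req_comp) (use hf hg RComp.prems wf wfr_idr t in auto)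
  also have "req n \<dots> (idr (rsrc g))"
    by (rule req_idl) (use wf wfr_idr t in auto)
  also have "req n \<dots> (idr (rsrc f))"
    using teq_req[OF teq_sym[OF t]] wf by simp
  finally show ?case by simp
next
  case (REta i j a b c d)
  have w: "wfr n a" "wfr n b" "wfr n c" "wfr n d" "1 \<le> i" "i < j" "j \<le> n"
    using REta.prems by auto
  have h: "cnt (rsrc a) = cnt (rtgt a)" "cnt (rsrc b) = cnt (rtgt b)"
     "cnt (rsrc c) = cnt (rtgt c)" "cnt (rsrc d) = cnt (rtgt d)"
     "val (rsrc a) \<le> val (rtgt a)" "val (rsrc b) \<le> val (rtgt b)"
     "val (rsrc c) \<le> val (rtgt c)" "val (rsrc d) \<le> val (rtgt d)"
    using w wfr_mono by auto
  define K where "K = cnt (rsrc a) * cnt (rsrc d) + cnt (rsrc b) * cnt (rsrc c)"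
  have eq: "val (rsrc a) + val (rsrc b) + val (rsrc c) + val (rsrc d) + i * K
      = val (rtgt a) + val (rtgt b) + val (rtgt c) + val (rtgt d) + j * K"
    using REta.prems(2) h unfolding K_def
    by (simp add: eta_arith algebra_simps)
  have "i * K \<le> j * K" using w by simp
  then have e: "val (rsrc a) = val (rtgt a)" "val (rsrc b) = val (rtgt b)"
    "val (rsrc c) = val (rtgt c)" "val (rsrc d) = val (rtgt d)" "i * K = j * K"
    using eq h by linarith+
  then have "K = 0" using w by simp
  then have z: "cnt (rsrc a) = 0 \<or> cnt (rsrc d) = 0" "cnt (rsrc b) = 0 \<or> cnt (rsrc c) = 0"
    unfolding K_def by auto
  have ih: "req n a (idr (rsrc a))" "req n b (idr (rsrc b))" "req n c (idr (rsrc c))"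
    "req n d (idr (rsrc d))" using REta.IH w e by auto
  have wt: "wft n (rsrc a)" "wft n (rsrc b)" "wft n (rsrc c)" "wft n (rsrc d)"
    using w wfr_wft by auto
  have "req n (REta i j a b c d) (ET i j (rsrc a) (rsrc b) (rsrc c) (rsrc d))"
    unfolding ET_def by (rule req_eta) (use ih REta.prems w wt wfr_idr in auto)
  also have "req n \<dots> (idr (rsrc (REta i j a b c d)))"
    using ET_triv[OF w(5-7) wt z] by simp
  finally show ?case by simp
qed

lemma eventually_const:
  fixes f :: "nat \<Rightarrow> nat"
  assumes m: "\<And>k. f k \<le> f (Suc k)" and b: "\<And>k. f k \<le> B"
  shows "\<exists>N. \<forall>k\<ge>N. f (Suc k) = f k"
proof -
  have fin: "finite (range f)" using b by (meson finite_atMost finite_subset image_subsetI atMost_iff)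
  define M where "M = Max (range f)"
  have "M \<in> range f" unfolding M_def using fin by (intro Max_in) auto
  then obtain N where N: "f N = M" by auto
  have le: "\<And>k. f k \<le> M" unfolding M_def using fin by auto
  have mono: "\<And>k. N \<le> k \<Longrightarrow> f N \<le> f k"
    using m by (rule lift_Suc_mono_le)
  show ?thesis
    by (rule exI[of _ N]) (metis N le le_Suc_eq mono antisym)
qed

theorem proposition5p4:
  fixes n :: nat and t :: "nat \<Rightarrow> 'a trm" and \<alpha> :: "nat \<Rightarrow> 'a red"
  assumes "n \<ge> 1"
    and "\<And>k. wft n (t k)"
    and "\<And>k. wfr n (\<alpha> k)"
    and "\<And>k. teq n (rsrc (\<alpha> k)) (t k)"
    and "\<And>k. teq n (rtgt (\<alpha> k)) (t (Suc k))"
  shows "\<exists>N. \<forall>k\<ge>N. req n (\<alpha> k) (idr (t k))"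
proof -
  have step: "cnt (t k) = cnt (t (Suc k)) \<and> val (t k) \<le> val (t (Suc k))" for k
    using wfr_mono[OF assms(3)[of k]] teq_inv[OF assms(4)[of k]] teq_inv[OF assms(5)[of k]]
    by auto
  have c: "cnt (t k) = cnt (t 0)" for k
    by (induction k) (use step in auto)
  have bd: "val (t k) \<le> n * cnt (t 0) ^ 2" for k
    using val_bound[OF assms(2)[of k]] c[of k] by simp
  obtain N where N: "\<And>k. k \<ge> N \<Longrightarrow> val (t (Suc k)) = val (t k)"
    using eventually_const[of "\<lambda>k. val (t k)", OF _ bd] step by blast
  show ?thesis
  proof (intro exI allI impI)
    fix k assume "N \<le> k"
    then have "val (rsrc (\<alpha> k)) = val (rtgt (\<alpha> k))"
      using N teq_inv[OF assms(4)[of k]] teq_inv[OF assms(5)[of k]] by simp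
    then have "req n (\<alpha> k) (idr (rsrc (\<alpha> k)))" using eq_id assms(3) by blast
    also have "req n (idr (rsrc (\<alpha> k))) (idr (t k))"
      using teq_req[OF assms(4)[of k]] wfr_wft assms(3) by blast
    finally show "req n (\<alpha> k) (idr (t k))" .
  qed
qed

end
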